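(* For every $r\geq 1$ there exists a polynomial $p_r$ of degree at most $2r-2$ such that for all $k\geq 3$, $$M(k;r)\leq \frac{k^{2r-1}}{(2r-1)!}+p_r(k).$$
   Context: A sequence of positive integers $w_1<\dots<w_n$ is an ascending wave if $w_{i+1}-w_i \geq w_i-w_{i-1}$ for $2\le i\le n-1$. $AW(k;r)$ is the least $N$ such that every $r$-coloring of $\{1,\dots,N\}$ contains a $k$-term monochromatic ascending wave. For $k\ge 2$ and $M\ge AW(k;r)$: for an $r$-coloring $\psi$ of $\{1,\dots,M\}$, $\delta_k(\psi)$ is the minimum of $w_k-w_{k-1}$ over all monochromatic $k$-term ascending waves $(w_1,\dots,w_k)$ under $\psi$, and $\Delta^M(k;r)$ is the maximum of $\delta_k(\psi)$ over all $r$-colorings $\psi$ of $\{1,\dots,M\}$. The integers $M(k;r)$ are defined by $M(k;1)=k$, $M(1;r)=1$, $M(2;r)=r+1$, and for $k\ge3$, $r\ge2$, $M(k;r)=M(k-1;r)+\Delta^{M(k-1;r)}(k-1;r)+M(k;r-1)-1$; one has $M(k;r)\ge AW(k;r)$ so these quantities are defined. *)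

theory Defs
  imports Complex_Main "HOL-Computational_Algebra.Polynomial"
begin

text \<open>A finite sequence of positive integers, given as a list w = [w_1,...,w_n]
  (list index i corresponds to w_(i+1)), is an ascending wave if it is strictly increasing
  and consecutive differences are non-decreasing.\<close>
definition ascending_wave :: "nat list \<Rightarrow> bool" where
  "ascending_wave w \<longleftrightarrow>
     (\<forall>x\<in>set w. 0 < x) \<and> sorted_wrt (<) w \<and>
     (\<forall>i. 1 \<le> i \<and> i + 1 < length w \<longrightarrow> w ! (i+1) - w ! i \<ge> w ! i - w ! (i - 1))"

text \<open>An r-coloring of {1..N}: colours are 0..r-1 (values outside {1..N} are irrelevant).\<close>
definition coloring :: "(nat \<Rightarrow> nat) \<Rightarrow> nat \<Rightarrow> nat \<Rightarrow> bool" where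
  "coloring \<psi> N r \<longleftrightarrow> (\<forall>x\<in>{1..N}. \<psi> x < r)"

definition mono_wave :: "(nat \<Rightarrow> nat) \<Rightarrow> nat \<Rightarrow> nat list \<Rightarrow> bool" where
  "mono_wave \<psi> N w \<longleftrightarrow> ascending_wave w \<and> set w \<subseteq> {1..N} \<and>
     (\<forall>x\<in>set w. \<forall>y\<in>set w. \<psi> x = \<psi> y)"

definition AW :: "nat \<Rightarrow> nat \<Rightarrow> nat" where
  "AW k r = (LEAST N. \<forall>\<psi>. coloring \<psi> N r \<longrightarrow> (\<exists>w. length w = k \<and> mono_wave \<psi> N w))"

definition delta :: "nat \<Rightarrow> (nat \<Rightarrow> nat) \<Rightarrow> nat \<Rightarrow> nat" where
  "delta k \<psi> M = Min {w ! (k-1) - w ! (k-2) | w. length w = k \<and> mono_wave \<psi> M w}"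

definition Delta :: "nat \<Rightarrow> nat \<Rightarrow> nat \<Rightarrow> nat" where
  "Delta M k r = Max {delta k \<psi> M | \<psi>. coloring \<psi> M r}"

text \<open>M(k;r) for k, r \<ge> 1 (value 0 is a junk value for k = 0 or r = 0).\<close>
function Mkr :: "nat \<Rightarrow> nat \<Rightarrow> nat" where
  "Mkr k r =
     (if k = 0 \<or> r = 0 then 0
      else if r = 1 then k
      else if k = 1 then 1
      else if k = 2 then r + 1
      else Mkr (k-1) r + Delta (Mkr (k-1) r) (k-1) r + Mkr k (r-1) - 1)"
  by pat_completeness auto
termination by (relation "measure (\<lambda>(k,r). k + r)") auto

end

theory Submission
  imports Defs
begin

declare Mkr.simps[simp del]

lemma Mkr_rec: "k \<ge> 3 \<Longrightarrow> r \<ge> 2 \<Longrightarrow>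
  Mkr k r = Mkr (k-1) r + Delta (Mkr (k-1) r) (k-1) r + Mkr k (r-1) - 1"
  by (subst Mkr.simps) simp

lemma Mkr_1: "k \<ge> 1 \<Longrightarrow> Mkr k 1 = k" by (subst Mkr.simps) simp
lemma Mkr_2: "r \<ge> 1 \<Longrightarrow> Mkr 2 r = r + 1" by (subst Mkr.simps) simp

lemma Mkr_ge: "k \<ge> 1 \<Longrightarrow> r \<ge> 1 \<Longrightarrow> Mkr k r \<ge> k"
proof (induction k r rule: Mkr.induct)
  case (1 k r)
  show ?case
  proof (cases "r = 1 \<or> k = 1 \<or> k = 2")
    case True
    then show ?thesis using "1.prems" by (subst Mkr.simps) auto
  next
    case False
    then have "Mkr k (r-1) \<ge> k" using 1 by auto
    moreover have "Mkr (k-1) r \<ge> k-1" using 1 False by auto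
    ultimately show ?thesis using False "1.prems" by (subst Mkr.simps) auto
  qed
qed

lemma wave_shift: "ascending_wave w \<Longrightarrow> ascending_wave (map (\<lambda>x. x + t) w)"
  unfolding ascending_wave_def
  by (auto simp: sorted_wrt_map)

lemma wave_snoc:
  assumes "ascending_wave w" "length w \<ge> 2"
    "x \<ge> w!(length w - 1) + (w!(length w - 1) - w!(length w - 2))"
    "w!(length w - 1) < x"
  shows "ascending_wave (w @ [x])"
proof -
  have "\<forall>y\<in>set w. y < x"
  proof
    fix y assume "y \<in> set w"
    then obtain i where i: "i < length w" "w!i = y" by (auto simp: in_set_conv_nth)
    have "w!i \<le> w!(length w - 1)"
      using assms(1) i unfolding ascending_wave_def
      by (metis One_nat_def Suc_pred le_less length_greater_0_conv less_Suc_eq_le list.size(3) not_less0 sorted_wrt_nth_less)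
    then show "y < x" using i assms(4) by simp
  qed
  moreover have "\<forall>i. 1 \<le> i \<and> i + 1 < length (w@[x]) \<longrightarrow> (w@[x]) ! (i+1) - (w@[x]) ! i \<ge> (w@[x]) ! i - (w@[x]) ! (i - 1)"
  proof (intro allI impI)
    fix i assume h: "1 \<le> i \<and> i + 1 < length (w@[x])"
    show "(w@[x]) ! (i+1) - (w@[x]) ! i \<ge> (w@[x]) ! i - (w@[x]) ! (i - 1)"
    proof (cases "i + 1 < length w")
      case True
      then show ?thesis using assms(1) h unfolding ascending_wave_def by (simp add: nth_append)
    next
      case False
      then have "i = length w - 1" using h by (simp add: nth_append) arith
      then show ?thesis using assms(2,3) by (simp add: nth_append numeral_2_eq_2) arith
    qed
  qed
  ultimately show ?thesis using assms(1) assms(4) unfolding ascending_wave_def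
    by (auto simp: sorted_wrt_append)
qed

definition WP :: "nat \<Rightarrow> nat \<Rightarrow> nat \<Rightarrow> bool" where
 "WP k r g \<longleftrightarrow> (\<forall>\<psi> t. (\<forall>x\<in>{t+1..t+Mkr k r}. \<psi> x < r) \<longrightarrow>
    (\<exists>w. length w = k \<and> ascending_wave w \<and> set w \<subseteq> {t+1..t+Mkr k r} \<and>
       (\<forall>x\<in>set w. \<psi> x = \<psi> (hd w)) \<and> w!(k-1) - w!(k-2) \<le> g))"

lemma WP_mono: assumes "WP k r g" "g \<le> g'" shows "WP k r g'"
  unfolding WP_def
proof (intro allI impI)
  fix \<psi> :: "nat \<Rightarrow> nat" and t assume "\<forall>x\<in>{t+1..t+Mkr k r}. \<psi> x < r"
  then obtain w where "length w = k \<and> ascending_wave w \<and> set w \<subseteq> {t+1..t+Mkr k r} \<and>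
       (\<forall>x\<in>set w. \<psi> x = \<psi> (hd w)) \<and> w!(k-1) - w!(k-2) \<le> g"
    using assms(1) unfolding WP_def by blast
  then show "\<exists>w. length w = k \<and> ascending_wave w \<and> set w \<subseteq> {t+1..t+Mkr k r} \<and>
       (\<forall>x\<in>set w. \<psi> x = \<psi> (hd w)) \<and> w!(k-1) - w!(k-2) \<le> g'"
    using assms(2) le_trans by blast
qed

lemma WP_1: assumes "k \<ge> 2" shows "WP k 1 1"
  unfolding WP_def
proof (intro allI impI)
  fix \<psi> :: "nat \<Rightarrow> nat" and t
  assume h: "\<forall>x\<in>{t+1..t+Mkr k 1}. \<psi> x < 1"
  define w where "w = map (\<lambda>i. t+1+i) [0..<k]"
  have mk: "Mkr k 1 = k" using assms Mkr_1 by simp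
  have len: "length w = k" by (simp add: w_def)
  have aw: "ascending_wave w" unfolding ascending_wave_def w_def
    by (auto simp: sorted_wrt_map sorted_wrt_upt)
  have st: "set w \<subseteq> {t+1..t+Mkr k 1}" using mk by (auto simp: w_def)
  have mono: "\<forall>x\<in>set w. \<psi> x = \<psi> (hd w)"
    using h st len assms by (cases w) auto
  have "w!(k-1) - w!(k-2) \<le> 1" using assms by (simp add: w_def)
  then show "\<exists>w. length w = k \<and> ascending_wave w \<and> set w \<subseteq> {t+1..t+Mkr k 1} \<and>
       (\<forall>x\<in>set w. \<psi> x = \<psi> (hd w)) \<and> w!(k-1) - w!(k-2) \<le> 1"
    using len aw st mono by blast
qed

lemma WP_2: assumes "r \<ge> 1" shows "WP 2 r r"
  unfolding WP_def
proof (intro allI impI)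
  fix \<psi> :: "nat \<Rightarrow> nat" and t
  assume h: "\<forall>x\<in>{t+1..t+Mkr 2 r}. \<psi> x < r"
  have mk: "Mkr 2 r = r + 1" using assms Mkr_2 by simp
  let ?A = "{t+1..t+(r+1)}"
  have "\<psi> ` ?A \<subseteq> {..<r}" using h mk by auto
  then have "card (\<psi> ` ?A) \<le> r" by (metis card_lessThan card_mono finite_lessThan)
  then have "\<not> inj_on \<psi> ?A" by (intro pigeonhole) simp
  then obtain x y where xy: "x \<in> ?A" "y \<in> ?A" "x < y" "\<psi> x = \<psi> y"
    unfolding inj_on_def by (metis linorder_neqE_nat)
  define w where "w = [x, y]"
  have aw: "ascending_wave w" unfolding ascending_wave_def w_def using xy by auto
  have "y - x \<le> r" using xy by auto
  then show "\<exists>w. length w = 2 \<and> ascending_wave w \<and> set w \<subseteq> {t+1..t+Mkr 2 r} \<and>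
       (\<forall>x\<in>set w. \<psi> x = \<psi> (hd w)) \<and> w!(2-1) - w!(2-2) \<le> r"
    using aw xy mk by (intro exI[of _ w]) (auto simp: w_def)
qed

lemma ne_of_mem: "x \<in> A \<Longrightarrow> A \<noteq> {}" by auto

lemma S_facts:
  assumes "k \<ge> 2" "WP k r g" "coloring \<psi> (Mkr k r) r"
  defines "S \<equiv> {w ! (k-1) - w ! (k-2) | w. length w = k \<and> mono_wave \<psi> (Mkr k r) w}"
  shows "finite S" "S \<noteq> {}" "Min S \<le> g"
proof -
  have col0: "\<forall>x\<in>{0+1..0+Mkr k r}. \<psi> x < r" using assms(3) unfolding coloring_def by simp
  from assms(2)[unfolded WP_def, THEN spec[of _ \<psi>], THEN spec[of _ 0], THEN mp, OF col0] obtain w where w: "length w = k" "ascending_wave w" "set w \<subseteq> {0+1..0+Mkr k r}"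
    "\<forall>x\<in>set w. \<psi> x = \<psi> (hd w)" "w!(k-1) - w!(k-2) \<le> g"
    by blast
  have "mono_wave \<psi> (Mkr k r) w" unfolding mono_wave_def using w by auto
  then have mem: "w!(k-1) - w!(k-2) \<in> S" unfolding S_def using w by blast
  have "S \<subseteq> {0..Mkr k r}"
  proof
    fix y assume "y \<in> S"
    then obtain v where v: "y = v!(k-1) - v!(k-2)" "length v = k" "mono_wave \<psi> (Mkr k r) v"
      unfolding S_def by blast
    have "v!(k-1) \<in> set v" using v(2) assms(1) by simp
    then have "v!(k-1) \<le> Mkr k r" using v(3) unfolding mono_wave_def by auto
    then show "y \<in> {0..Mkr k r}" using v(1) by simp
  qed
  then show fin: "finite S" using finite_subset by blast
  show "S \<noteq> {}" using mem by blast
  show "Min S \<le> g" using Min_le[OF fin mem] w(5) by linarith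
qed

lemma Delta_set:
  assumes "k \<ge> 2" "r \<ge> 1" "WP k r g"
  shows "finite {delta k \<psi> (Mkr k r) | \<psi>. coloring \<psi> (Mkr k r) r}"
        "Delta (Mkr k r) k r \<le> g"
proof -
  let ?D = "{delta k \<psi> (Mkr k r) | \<psi>. coloring \<psi> (Mkr k r) r}"
  have sub: "?D \<subseteq> {0..g}"
  proof
    fix y assume "y \<in> ?D"
    then obtain \<psi> where "y = delta k \<psi> (Mkr k r)" "coloring \<psi> (Mkr k r) r" by blast
    then show "y \<in> {0..g}" using S_facts(3)[OF assms(1,3)] unfolding delta_def by auto
  qed
  then show fin: "finite ?D" by (rule finite_subset) simp
  have "coloring (\<lambda>_. 0) (Mkr k r) r" unfolding coloring_def using assms(2) by simp
  then have "delta k (\<lambda>_. 0) (Mkr k r) \<in> ?D" by auto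
  then have ne: "?D \<noteq> {}" by (rule ne_of_mem)
  have "Max ?D \<le> g" using fin ne sub by (intro Max.boundedI) auto
  then show "Delta (Mkr k r) k r \<le> g" unfolding Delta_def .
qed

lemma wave_Delta:
  assumes "k \<ge> 2" "r \<ge> 1" "WP k r g" "coloring \<psi> (Mkr k r) r"
  shows "\<exists>w. length w = k \<and> ascending_wave w \<and> set w \<subseteq> {1..Mkr k r} \<and>
       (\<forall>x\<in>set w. \<psi> x = \<psi> (hd w)) \<and> w!(k-1) - w!(k-2) \<le> Delta (Mkr k r) k r"
proof -
  define S where "S = {w ! (k-1) - w ! (k-2) | w. length w = k \<and> mono_wave \<psi> (Mkr k r) w}"
  have "Min S \<in> S" using S_facts[OF assms(1,3,4)] unfolding S_def by (intro Min_in) auto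
  then have "\<exists>w. Min S = w ! (k-1) - w ! (k-2) \<and> length w = k \<and> mono_wave \<psi> (Mkr k r) w"
    unfolding S_def by (simp only: mem_Collect_eq)
  then obtain w where w: "Min S = w ! (k-1) - w ! (k-2)" "length w = k" "mono_wave \<psi> (Mkr k r) w"
    by blast
  have mem: "delta k \<psi> (Mkr k r) \<in> {delta k \<psi> (Mkr k r) | \<psi>. coloring \<psi> (Mkr k r) r}"
    using assms(4) by auto
  have "delta k \<psi> (Mkr k r) \<le> Delta (Mkr k r) k r"
    unfolding Delta_def by (rule Max_ge[OF Delta_set(1)[OF assms(1,2,3)] mem])
  then have gap: "w ! (k-1) - w ! (k-2) \<le> Delta (Mkr k r) k r"
    using w(1) unfolding delta_def S_def by simp
  have h0: "hd w \<in> set w" using w(2) assms(1) by (cases w) auto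
  have aw: "ascending_wave w" and sw: "set w \<subseteq> {1..Mkr k r}"
    and mw: "\<forall>x\<in>set w. \<forall>y\<in>set w. \<psi> x = \<psi> y"
    using w(3) unfolding mono_wave_def by blast+
  have "\<forall>x\<in>set w. \<psi> x = \<psi> (hd w)" using mw h0 by blast
  then show ?thesis using w(2) aw sw gap by blast
qed

lemma WP_step:
  assumes k: "k \<ge> 3" and r: "r \<ge> 2" and W1: "WP (k-1) r g1" and W2: "WP k (r-1) g2"
  shows "WP k r (max (Delta (Mkr (k-1) r) (k-1) r + Mkr k (r-1) - 1) g2)"
  unfolding WP_def
proof (intro allI impI)
  fix \<psi> :: "nat \<Rightarrow> nat" and t
  assume h: "\<forall>x\<in>{t+1..t+Mkr k r}. \<psi> x < r"
  let ?A = "Mkr (k-1) r" and ?d = "Delta (Mkr (k-1) r) (k-1) r" and ?B = "Mkr k (r-1)"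
  let ?G = "max (?d + ?B - 1) g2"
  have mk: "Mkr k r = ?A + ?d + ?B - 1" using Mkr_rec[OF k r] .
  have "?B \<ge> k" by (rule Mkr_ge) (use k r in auto)
  then have B1: "?B \<ge> 1" using k by linarith
  have "coloring (\<lambda>x. \<psi> (x + t)) ?A r" unfolding coloring_def
  proof
    fix x assume "x \<in> {1..?A}"
    then have "x + t \<in> {t+1..t+Mkr k r}" using mk B1 by (simp only: atLeastAtMost_iff) arith
    then show "\<psi> (x + t) < r" using h by blast
  qed
  moreover have k1: "k-1 \<ge> 2" using k by simp
  moreover have r1: "r \<ge> 1" using r by simp
  ultimately obtain w' where w':
    "length w' = k-1" "ascending_wave w'" "set w' \<subseteq> {1..?A}"
    "\<forall>x\<in>set w'. \<psi> (x + t) = \<psi> (hd w' + t)" "w'!(k-1-1) - w'!(k-1-2) \<le> ?d"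
    using wave_Delta[OF k1 r1 W1] by blast
  have e12: "k-1-1 = k-2" "k-1-2 = k-3" by simp_all
  define w where "w = map (\<lambda>x. x + t) w'"
  define c where "c = \<psi> (hd w)"
  define L where "L = w!(k-2)"
  have len: "length w = k-1" using w' by (simp add: w_def)
  have aw: "ascending_wave w" using wave_shift[OF w'(2)] by (simp add: w_def)
  have sw: "set w \<subseteq> {t+1..t+?A}" using w'(3) by (auto simp: w_def)
  have wne: "w' \<noteq> []" using w'(1) k by auto
  have hdw: "hd w = hd w' + t" using wne by (simp add: w_def hd_map)
  have mono: "\<forall>x\<in>set w. \<psi> x = c"
  proof
    fix x assume "x \<in> set w"
    then obtain y where y: "y \<in> set w'" "x = y + t" unfolding w_def by auto
    then show "\<psi> x = c" using w'(4) hdw unfolding c_def by simp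
  qed
  have gapw: "w!(k-2) - w!(k-3) \<le> ?d" using w'(5) len k unfolding e12 by (simp add: w_def)
  have Lset: "L \<in> set w" using len k by (simp add: L_def)
  then have Lb: "t+1 \<le> L" "L \<le> t + ?A" using sw by auto
  have lt: "w!(k-3) < w!(k-2)"
  proof -
    have "sorted_wrt (<) w" using aw unfolding ascending_wave_def by blast
    then show ?thesis using sorted_wrt_nth_less[of "(<)" w "k-3" "k-2"] len k by simp
  qed
  then have d1: "?d \<ge> 1" using gapw by linarith
  have key: "Mkr k r + 1 = ?A + ?d + ?B" using mk B1 by arith
  have "L \<le> t + Mkr k r" using Lb(2) key B1 by linarith
  then have "L \<in> {t+1..t+Mkr k r}" using Lb(1) by simp
  then have "\<psi> L < r" using h by blast
  moreover have "\<psi> L = c" using mono Lset by blast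
  ultimately have hc: "c < r" by simp
  show "\<exists>v. length v = k \<and> ascending_wave v \<and> set v \<subseteq> {t+1..t+Mkr k r} \<and>
       (\<forall>x\<in>set v. \<psi> x = \<psi> (hd v)) \<and> v!(k-1) - v!(k-2) \<le> ?G"
  proof (cases "\<exists>x\<in>{L+?d..L+?d+?B-1}. \<psi> x = c")
    case True
    then obtain x where x: "x \<in> {L+?d..L+?d+?B-1}" "\<psi> x = c" by blast
    define v where "v = w @ [x]"
    have lv: "length v = k" using len k by (simp add: v_def)
    have lw1: "length w - 1 = k - 2" "length w - 2 = k - 3" using len by auto
    have x0: "L + ?d \<le> x" "x \<le> L + ?d + ?B - 1" using x(1) by simp_all
    have gl: "L - w!(k-3) \<le> ?d" using gapw unfolding L_def .
    have p2: "length w \<ge> 2" using len k by simp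
    have p3: "w!(length w - 1) + (w!(length w - 1) - w!(length w - 2)) \<le> x"
      unfolding lw1 L_def[symmetric] using x0(1) gl by linarith
    have p4: "w!(length w - 1) < x" unfolding lw1 L_def[symmetric] using x0(1) d1 by linarith
    have av: "ascending_wave v" unfolding v_def by (rule wave_snoc[OF aw p2 p3 p4])
    have "x \<le> t + Mkr k r" using x0(2) Lb(2) key B1 by linarith
    moreover have "t + 1 \<le> x" using x0(1) Lb(1) by linarith
    ultimately have "x \<in> {t+1..t+Mkr k r}" by simp
    moreover have "set w \<subseteq> {t+1..t+Mkr k r}"
    proof -
      have "t + ?A \<le> t + Mkr k r" using key B1 by linarith
      then have "{t+1..t+?A} \<subseteq> {t+1..t+Mkr k r}" by simp
      then show ?thesis using sw by (rule order_trans[rotated])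
    qed
    ultimately have sv: "set v \<subseteq> {t+1..t+Mkr k r}" by (simp add: v_def)
    have "hd v = hd w" using len k by (cases w) (auto simp: v_def)
    then have mv: "\<forall>y\<in>set v. \<psi> y = \<psi> (hd v)"
      using mono x(2) len k c_def by (auto simp: v_def)
    have "v!(k-1) = x" "v!(k-2) = L" using len k by (auto simp: v_def L_def nth_append)
    then have "v!(k-1) - v!(k-2) \<le> ?d + ?B - 1" using x0 by linarith
    then have "v!(k-1) - v!(k-2) \<le> ?G" by (rule le_trans[OF _ max.cobounded1])
    then show ?thesis using lv av sv mv by (intro exI[of _ v]) simp
  next
    case False
    define s where "s = L + ?d - 1"
    define \<phi> where "\<phi> x = (if \<psi> x < c then \<psi> x else \<psi> x - 1)" for x
    have s1: "s + 1 = L + ?d" using d1 by (simp add: s_def)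
    have I: "{s+1..s+?B} = {L+?d..L+?d+?B-1}"
    proof (rule set_eqI)
      fix y show "y \<in> {s+1..s+?B} \<longleftrightarrow> y \<in> {L+?d..L+?d+?B-1}"
        using s1 B1 by (simp only: atLeastAtMost_iff) linarith
    qed
    have sub: "{s+1..s+?B} \<subseteq> {t+1..t+Mkr k r}"
    proof
      fix y assume "y \<in> {s+1..s+?B}"
      then have "s + 1 \<le> y" "y \<le> s + ?B" by simp_all
      then have "t+1 \<le> y" "y \<le> t + Mkr k r" using s1 Lb key by linarith+
      then show "y \<in> {t+1..t+Mkr k r}" by simp
    qed
    have col: "\<forall>x\<in>{s+1..s+Mkr k (r-1)}. \<phi> x < r - 1"
    proof
      fix x assume xs: "x \<in> {s+1..s+Mkr k (r-1)}"
      then have "\<psi> x \<noteq> c" using False I by blast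
      moreover have "\<psi> x < r" using xs sub h by blast
      ultimately show "\<phi> x < r - 1" using hc by (auto simp: \<phi>_def)
    qed
    from W2[unfolded WP_def, THEN spec[of _ \<phi>], THEN spec[of _ s], THEN mp, OF col] obtain v where v:
      "length v = k" "ascending_wave v" "set v \<subseteq> {s+1..s+?B}"
      "\<forall>x\<in>set v. \<phi> x = \<phi> (hd v)" "v!(k-1) - v!(k-2) \<le> g2" by blast
    have hv: "hd v \<in> set v" using v(1) k by (cases v) auto
    have mv: "\<forall>x\<in>set v. \<psi> x = \<psi> (hd v)"
    proof
      fix x assume xv: "x \<in> set v"
      have "\<psi> x \<noteq> c" "\<psi> (hd v) \<noteq> c" using xv hv v(3) False I by blast+
      moreover have "\<phi> x = \<phi> (hd v)" using v(4) xv by blast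
      ultimately show "\<psi> x = \<psi> (hd v)" unfolding \<phi>_def by (auto split: if_splits)
    qed
    have "set v \<subseteq> {t+1..t+Mkr k r}" using v(3) sub by (rule order_trans)
    moreover have "v!(k-1) - v!(k-2) \<le> ?G" by (rule le_trans[OF v(5) max.cobounded2])
    ultimately show ?thesis using v(1,2) mv by (intro exI[of _ v]) simp
  qed
qed

lemma choose_ge_n: "1 \<le> m \<Longrightarrow> m < n \<Longrightarrow> n \<le> n choose m"
proof (induction n)
  case 0 then show ?case by simp
next
  case (Suc n)
  obtain m' where m': "m = Suc m'" using Suc.prems by (cases m) auto
  show ?case
  proof (cases "m < n")
    case True
    then have "n \<le> n choose m" using Suc by simp
    moreover have "1 \<le> n choose m'" using True m' by (simp add: Suc_le_eq)
    ultimately show ?thesis using m' by simp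
  next
    case False
    then have "m = n" using Suc.prems by simp
    then show ?thesis using m' by simp
  qed
qed

lemma choose_shift2: "n choose m \<le> (n+2) choose (m+2)"
proof -
  have "n choose m \<le> Suc n choose Suc m" by simp
  also have "\<dots> \<le> Suc (Suc n) choose Suc (Suc m)" by simp
  finally show ?thesis by (simp add: numeral_2_eq_2)
qed

lemma main: "r \<ge> 1 \<Longrightarrow> \<exists>a b. \<forall>k\<ge>2. WP k r ((k+b) choose (2*r-2)) \<and> Mkr k r \<le> (k+a) choose (2*r-1)"
proof (induction r rule: nat_induct_at_least)
  case base
  show ?case
  proof (intro exI[of _ 0] allI impI conjI)
    fix k :: nat assume "k \<ge> 2"
    then show "WP k 1 ((k+0) choose (2*1-2))" using WP_1 by simp
    show "Mkr k 1 \<le> (k+0) choose (2*1-1)" using \<open>k \<ge> 2\<close> Mkr_1 by simp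
  qed
next
  case (Suc r)
  then obtain a b where ab: "\<forall>k\<ge>2. WP k r ((k+b) choose (2*r-2)) \<and> Mkr k r \<le> (k+a) choose (2*r-1)"
    by blast
  define b' where "b' = a + b + 2*r + 2"
  define a' where "a' = a + b' + 2"
  have "\<forall>k\<ge>2. WP k (Suc r) ((k+b') choose (2*r)) \<and> Mkr k (Suc r) \<le> (k+a') choose (2*r+1)"
  proof (intro allI impI)
    fix k :: nat assume "k \<ge> 2"
    then show "WP k (Suc r) ((k+b') choose (2*r)) \<and> Mkr k (Suc r) \<le> (k+a') choose (2*r+1)"
    proof (induction k rule: nat_induct_at_least)
      case base
      have "Suc r \<le> (2+b') choose (2*r)"
        using choose_ge_n[of "2*r" "2+b'"] Suc.hyps by (simp add: b'_def)
      then have "WP 2 (Suc r) ((2+b') choose (2*r))" using WP_mono[OF WP_2] by simp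
      moreover have "Suc r + 1 \<le> (2+a') choose (2*r+1)"
        using choose_ge_n[of "2*r+1" "2+a'"] Suc.hyps by (simp add: a'_def b'_def)
      ultimately show ?case using Mkr_2[of "Suc r"] by simp
    next
      case (Suc k)
      note IH = Suc.IH
      have k2: "k \<ge> 2" using Suc.hyps .
      have r1: "r \<ge> 1" using \<open>1 \<le> r\<close> .
      let ?g1 = "(k+b') choose (2*r)"
      have W1: "WP k (Suc r) ?g1" using IH by blast
      have Mk: "Mkr k (Suc r) \<le> (k+a') choose (2*r+1)" using IH by blast
      have W2: "WP (Suc k) r ((Suc k+b) choose (2*r-2))" using ab[rule_format, of "Suc k"] k2 by simp
      have M2: "Mkr (Suc k) r \<le> (Suc k+a) choose (2*r-1)" using ab[rule_format, of "Suc k"] k2 by simp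
      have D: "Delta (Mkr k (Suc r)) k (Suc r) \<le> ?g1" using Delta_set(2)[OF k2 _ W1] by simp
      have ws: "WP (Suc k) (Suc r) (max (Delta (Mkr k (Suc r)) k (Suc r) + Mkr (Suc k) r - 1) ((Suc k+b) choose (2*r-2)))"
        using WP_step[of "Suc k" "Suc r"] W1 W2 k2 r1 by simp
      have pas: "Suc (k+b') choose (2*r) = ((k+b') choose (2*r-1)) + ((k+b') choose (2*r))"
        using r1 binomial_Suc_Suc[of "k+b'" "2*r-1"] by simp
      have m1: "(Suc k+a) choose (2*r-1) \<le> (k+b') choose (2*r-1)"
        by (rule binomial_right_mono) (simp add: b'_def)
      have e1: "Delta (Mkr k (Suc r)) k (Suc r) + Mkr (Suc k) r \<le> (Suc k+b') choose (2*r)"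
        using D M2 m1 pas by simp
      have c1: "(Suc k+b) choose (2*r-2) \<le> (Suc k+b+2) choose (2*r-2+2)" by (rule choose_shift2)
      have e: "2*r-2+2 = 2*r" using r1 by simp
      have c2: "(Suc k+b+2) choose (2*r) \<le> (Suc k+b') choose (2*r)"
        by (rule binomial_right_mono) (simp add: b'_def)
      have e2: "(Suc k+b) choose (2*r-2) \<le> (Suc k+b') choose (2*r)" using c1 c2 unfolding e by linarith
      have W: "WP (Suc k) (Suc r) ((Suc k+b') choose (2*r))"
        using WP_mono[OF ws] e1 e2 by simp
      have mr: "Mkr (Suc k) (Suc r) = Mkr k (Suc r) + Delta (Mkr k (Suc r)) k (Suc r) + Mkr (Suc k) r - 1"
        using Mkr_rec[of "Suc k" "Suc r"] k2 r1 by simp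
      have m3: "(Suc k+b') choose (2*r) \<le> (k+a') choose (2*r)"
        by (rule binomial_right_mono) (simp add: a'_def)
      have pas2: "(Suc k+a') choose (2*r+1) = ((k+a') choose (2*r)) + ((k+a') choose (2*r+1))"
        by simp
      have "Mkr (Suc k) (Suc r) \<le> (Suc k+a') choose (2*r+1)"
        using mr Mk e1 m3 pas2 by simp
      then show ?case using W by simp
    qed
  qed
  then show ?case by (intro exI[of _ a'] exI[of _ b']) simp
qed

theorem lemma1p4:
  fixes r :: nat
  assumes "r \<ge> 1"
  shows "\<exists>p :: real poly. degree p \<le> 2*r - 2 \<and>
           (\<forall>k::nat. k \<ge> 3 \<longrightarrow>
              real (Mkr k r) \<le> real k ^ (2*r - 1) / fact (2*r - 1) + poly p (real k))"
proof -
  obtain a b where ab: "\<forall>k\<ge>2. WP k r ((k+b) choose (2*r-2)) \<and> Mkr k r \<le> (k+a) choose (2*r-1)"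
    using main[OF assms] by blast
  define n where "n = 2*r - 1"
  have n: "n = Suc (2*r-2)" using assms by (simp add: n_def)
  define p :: "real poly" where
    "p = (\<Sum>i<n. smult (real (n choose i) * real a ^ (n-i) / fact n) (monom 1 i))"
  have dp: "degree p \<le> 2*r - 2" unfolding p_def
  proof (rule degree_sum_le)
    fix i assume "i \<in> {..<n}"
    then show "degree (smult (real (n choose i) * real a ^ (n-i) / fact n) (monom 1 i)) \<le> 2*r-2"
      using n by (metis degree_monom_le degree_smult_le le_trans less_Suc_eq_le lessThan_iff)
  qed simp
  have pp: "poly p x = (\<Sum>i<n. real (n choose i) * real a ^ (n-i) / fact n * x ^ i)" for x
    unfolding p_def by (simp add: poly_sum poly_monom)
  have bnd: "real (Mkr k r) \<le> real k ^ n / fact n + poly p (real k)" if k: "k \<ge> 3" for k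
  proof -
    have "Mkr k r \<le> (k+a) choose n" using ab k n_def by simp
    then have "real (Mkr k r) \<le> real ((k+a) choose n)" by simp
    also have "\<dots> \<le> real (k+a) ^ n / fact n"
    proof -
      have "real ((k+a) choose n) * fact n \<le> real ((k+a)^n)"
        using binomial_fact_pow[of "k+a" n] by (metis of_nat_fact of_nat_le_iff of_nat_mult)
      then show ?thesis by (simp add: field_simps)
    qed
    also have "real (k+a) ^ n = (\<Sum>i\<le>n. real (n choose i) * real k ^ i * real a ^ (n-i))"
      using binomial_ring[of "real k" "real a" n] by simp
    also have "\<dots> = real k ^ n + (\<Sum>i<n. real (n choose i) * real k ^ i * real a ^ (n-i))"
      by (simp add: lessThan_Suc_atMost[symmetric])
    also have "\<dots> / fact n = real k ^ n / fact n + poly p (real k)"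
      unfolding pp by (simp add: add_divide_distrib sum_divide_distrib mult_ac)
    finally show ?thesis .
  qed
  show ?thesis using dp bnd n_def by blast
qed

end
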